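(* In the While-language extended with non-deterministic input, for all commands $c_1,c_2$ and store $\sigma$: if $(c_1;c_2,\sigma)\to^\infty$ and there is no store $\sigma'$ with $(c_1,\sigma)\to^*(\mathsf{skip},\sigma')$, then $(c_1,\sigma)\to^\infty$.
   Context: Extended While-language syntax: variables $x$ range over a countably infinite set $\mathit{Var}$; $n$ ranges over natural numbers; values are $v ::= \mathsf{null}\mid n$ ($\mathsf{null}$ distinct from every natural number); expressions are $e ::= v\mid x\mid e_1\oplus e_2\mid\mathsf{input}$ with $\oplus\in\{+,-,*\}$, where $\oplus(n_1,n_2)$ is the result of the operation on naturals; commands are $c ::= \mathsf{skip}\mid\mathsf{alloc}\ x\mid x:=e\mid c_1;c_2\mid \mathsf{if}\ e\ c_1\ c_2\mid\mathsf{while}\ e\ c$. A store $\sigma$ is a finite partial map from $\mathit{Var}$ to values, with domain $\mathrm{dom}(\sigma)$, lookup $\sigma(x)$, update $\sigma[x\mapsto v]$. Expression evaluation $(e,\sigma)\Rightarrow_E v$ is the least relation with: $(v,\sigma)\Rightarrow_E v$; $(x,\sigma)\Rightarrow_E\sigma(x)$ if $x\in\mathrm{dom}(\sigma)$; if $(e_1,\sigma)\Rightarrow_E n_1$ and $(e_2,\sigma)\Rightarrow_E n_2$ with $n_1,n_2$ naturals then $(e_1\oplus e_2,\sigma)\Rightarrow_E\oplus(n_1,n_2)$; and $(\mathsf{input},\sigma)\Rightarrow_E v$ for every value $v$ (non-deterministic input). Small-step relation $(c,\sigma)\to(c',\sigma')$ is the least relation with: $(\mathsf{alloc}\ x,\sigma)\to(\mathsf{skip},\sigma[x\mapsto\mathsf{null}])$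 if $x\notin\mathrm{dom}(\sigma)$; $(x:=e,\sigma)\to(\mathsf{skip},\sigma[x\mapsto v])$ if $x\in\mathrm{dom}(\sigma)$ and $(e,\sigma)\Rightarrow_E v$; $(c_1;c_2,\sigma)\to(c_1';c_2,\sigma')$ if $(c_1,\sigma)\to(c_1',\sigma')$; $(\mathsf{skip};c_2,\sigma)\to(c_2,\sigma)$; $(\mathsf{if}\ e\ c_1\ c_2,\sigma)\to(c_1,\sigma)$ if $(e,\sigma)\Rightarrow_E v$, $v\neq 0$; $(\mathsf{if}\ e\ c_1\ c_2,\sigma)\to(c_2,\sigma)$ if $(e,\sigma)\Rightarrow_E 0$; $(\mathsf{while}\ e\ c,\sigma)\to(c;\mathsf{while}\ e\ c,\sigma)$ if $(e,\sigma)\Rightarrow_E v$, $v\neq0$; $(\mathsf{while}\ e\ c,\sigma)\to(\mathsf{skip},\sigma)$ if $(e,\sigma)\Rightarrow_E 0$. $\to^*$ is its reflexive-transitive closure. The predicate $(c,\sigma)\to^\infty$ is coinductively defined (greatest predicate) by: if $(c,\sigma)\to(c',\sigma')$ and $(c',\sigma')\to^\infty$ then $(c,\sigma)\to^\infty$. *)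

theory Defs
  imports Main
begin

type_synonym vname = string

datatype val = Null | N nat

datatype bop = Plus | Minus | Times

fun apply_bop :: "bop \<Rightarrow> nat \<Rightarrow> nat \<Rightarrow> nat" where
  "apply_bop Plus a b = a + b"
| "apply_bop Minus a b = a - b"
| "apply_bop Times a b = a * b"

datatype exp = Val val | Var vname | BinOp exp bop exp | Input

datatype com = Skip | Alloc vname | Assign vname exp | Seq com com
  | If exp com com | While exp com

type_synonym store = "vname \<rightharpoonup> val"

inductive eval :: "exp \<Rightarrow> store \<Rightarrow> val \<Rightarrow> bool" where
  EVal: "eval (Val v) \<sigma> v"
| EVar: "\<sigma> x = Some v \<Longrightarrow> eval (Var x) \<sigma> v"
| EBin: "eval e1 \<sigma> (N n1) \<Longrightarrow> eval e2 \<sigma> (N n2) \<Longrightarrow>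
         eval (BinOp e1 op e2) \<sigma> (N (apply_bop op n1 n2))"
| EInput: "eval Input \<sigma> v"

inductive step :: "com \<times> store \<Rightarrow> com \<times> store \<Rightarrow> bool" (infix "\<rightarrow>" 55) where
  SAlloc: "x \<notin> dom \<sigma> \<Longrightarrow> (Alloc x, \<sigma>) \<rightarrow> (Skip, \<sigma>(x \<mapsto> Null))"
| SAssign: "x \<in> dom \<sigma> \<Longrightarrow> eval e \<sigma> v \<Longrightarrow> (Assign x e, \<sigma>) \<rightarrow> (Skip, \<sigma>(x \<mapsto> v))"
| SSeq1: "(c1, \<sigma>) \<rightarrow> (c1', \<sigma>') \<Longrightarrow> (Seq c1 c2, \<sigma>) \<rightarrow> (Seq c1' c2, \<sigma>')"
| SSeq2: "(Seq Skip c2, \<sigma>) \<rightarrow> (c2, \<sigma>)"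
| SIfT: "eval e \<sigma> v \<Longrightarrow> v \<noteq> N 0 \<Longrightarrow> (If e c1 c2, \<sigma>) \<rightarrow> (c1, \<sigma>)"
| SIfF: "eval e \<sigma> (N 0) \<Longrightarrow> (If e c1 c2, \<sigma>) \<rightarrow> (c2, \<sigma>)"
| SWhileT: "eval e \<sigma> v \<Longrightarrow> v \<noteq> N 0 \<Longrightarrow> (While e c, \<sigma>) \<rightarrow> (Seq c (While e c), \<sigma>)"
| SWhileF: "eval e \<sigma> (N 0) \<Longrightarrow> (While e c, \<sigma>) \<rightarrow> (Skip, \<sigma>)"

abbreviation steps :: "com \<times> store \<Rightarrow> com \<times> store \<Rightarrow> bool" (infix "\<rightarrow>*" 55) where
  "cs \<rightarrow>* cs' \<equiv> step\<^sup>*\<^sup>* cs cs'"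

coinductive diverges :: "com \<times> store \<Rightarrow> bool" where
  "cs \<rightarrow> cs' \<Longrightarrow> diverges cs' \<Longrightarrow> diverges cs"

end

theory Submission
  imports Defs
begin

lemma aux:
  assumes "\<exists>c2. diverges (Seq (fst cs) c2, snd cs) \<and> \<not> (\<exists>\<sigma>'. cs \<rightarrow>* (Skip, \<sigma>'))"
  shows "diverges cs"
  using assms
proof (coinduction arbitrary: cs)
  case (diverges cs)
  then obtain c2 where d: "diverges (Seq (fst cs) c2, snd cs)"
    and ns: "\<not> (\<exists>\<sigma>'. cs \<rightarrow>* (Skip, \<sigma>'))" by blast
  from d obtain cs' where st: "(Seq (fst cs) c2, snd cs) \<rightarrow> cs'" and d': "diverges cs'"
    by (cases rule: diverges.cases) auto
  from st show ?case
  proof (cases rule: step.cases)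
    case (SSeq1 c1' \<sigma>')
    have "(fst cs, snd cs) \<rightarrow> (c1', \<sigma>')" using SSeq1 by simp
    hence s1: "cs \<rightarrow> (c1', \<sigma>')" by simp
    have "\<not> (\<exists>\<sigma>''. (c1', \<sigma>') \<rightarrow>* (Skip, \<sigma>''))"
      using ns s1 by (meson converse_rtranclp_into_rtranclp)
    thus ?thesis using s1 d' SSeq1 by auto
  next
    case (SSeq2)
    hence "cs = (Skip, snd cs)" by (metis prod.collapse)
    hence False using ns by (metis rtranclp.rtrancl_refl)
    thus ?thesis ..
  qed
qed

theorem lemma25:
  fixes c1 c2 :: com and \<sigma> :: store
  assumes "finite (dom \<sigma>)"
    and "diverges (Seq c1 c2, \<sigma>)"
    and "\<not> (\<exists>\<sigma>'. (c1, \<sigma>) \<rightarrow>* (Skip, \<sigma>'))"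
  shows "diverges (c1, \<sigma>)"
  using aux[of "(c1, \<sigma>)"] assms by auto

end
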